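(* Let $f,g\in C[0,1]$ be real-valued continuous functions and let $f\cdot g$ denote their pointwise product. Then $$\overline{\dim}_B G(f\cdot g)\le \max\{\overline{\dim}_B G(f),\ \overline{\dim}_B G(g)\}.$$
   Context: $C[0,1]$ is the space of real-valued continuous functions on $[0,1]$. For $f\in C[0,1]$, the graph is $G(f)=\{(x,f(x)):x\in[0,1]\}\subset\mathbb{R}^2$. For a nonempty bounded set $F$, $N_\delta(F)$ is the smallest number of sets of diameter at most $\delta$ covering $F$, and the upper and lower box-counting dimensions are $\overline{\dim}_B F=\limsup_{\delta\to0}\frac{\log N_\delta(F)}{-\log\delta}$ and $\underline{\dim}_B F=\liminf_{\delta\to0}\frac{\log N_\delta(F)}{-\log\delta}$. *)

theory Defs
  imports "HOL-Analysis.Analysis"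
begin

definition graph01 :: "(real \<Rightarrow> real) \<Rightarrow> (real \<times> real) set" where
  "graph01 f = {(x, f x) | x. x \<in> {0..1}}"

text \<open>N_delta(F): smallest number of sets of diameter at most delta covering F.
  Boundedness of each covering set is required so that the library's diameter is meaningful.\<close>
definition cover_number :: "real \<Rightarrow> ('a::metric_space) set \<Rightarrow> nat" where
  "cover_number \<delta> F = (LEAST n. \<exists>C. finite C \<and> card C = n \<and>
      (\<forall>S\<in>C. bounded S \<and> diameter S \<le> \<delta>) \<and> F \<subseteq> \<Union>C)"

definition upper_box_dim :: "('a::metric_space) set \<Rightarrow> ereal" where
  "upper_box_dim F = Limsup (at_right 0)
      (\<lambda>\<delta>. ereal (ln (real (cover_number \<delta> F)) / (- ln \<delta>)))"

end

theory Submission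
  imports Defs
begin

definition col :: "real \<Rightarrow> nat \<Rightarrow> real set" where
  "col h k = {real k * h .. min (real (Suc k) * h) 1}"
definition ncol :: "real \<Rightarrow> nat" where "ncol h = nat \<lceil>1/h\<rceil>"
definition lo :: "(real \<Rightarrow> real) \<Rightarrow> real \<Rightarrow> nat \<Rightarrow> real" where
  "lo \<phi> h k = Inf (\<phi> ` col h k)"
definition hi :: "(real \<Rightarrow> real) \<Rightarrow> real \<Rightarrow> nat \<Rightarrow> real" where
  "hi \<phi> h k = Sup (\<phi> ` col h k)"

lemma col_basic:
  assumes "0 < h" "k < ncol h"
  shows "real k * h \<in> col h k" "col h k \<subseteq> {0..1}"
proof -
  have "real k < 1/h" using assms unfolding ncol_def by linarith
  hence "real k * h < 1" using assms by (simp add: field_simps)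
  thus "real k * h \<in> col h k" using assms by (auto simp: col_def algebra_simps)
  show "col h k \<subseteq> {0..1}" using assms by (auto simp: col_def)
qed

lemma col_cover:
  assumes "0 < h" "x \<in> {0..1}"
  shows "\<exists>k<ncol h. x \<in> col h k"
proof -
  define K where "K = ncol h"
  have "1/h \<le> real K" unfolding K_def ncol_def by linarith
  hence K1: "1 \<le> real K * h" using assms by (simp add: field_simps)
  have Kpos: "K > 0" using K1 by (cases K) auto
  define m where "m = nat \<lfloor>x/h\<rfloor>"
  have xh: "x/h \<ge> 0" using assms by auto
  have m1: "real m \<le> x/h" "x/h < real m + 1" using xh unfolding m_def by linarith+
  have fl: "real m * h \<le> x" "x < (real m + 1) * h"
    using m1 assms by (simp_all add: field_simps)
  define k where "k = min m (K - 1)"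
  have "k < K" using Kpos unfolding k_def by auto
  moreover have "real k * h \<le> x"
  proof (cases "m \<le> K - 1")
    case True thus ?thesis using fl by (simp add: k_def)
  next
    case False
    hence "real (K-1) \<le> real m" by simp
    hence "real (K-1) * h \<le> real m * h" using assms by (simp add: mult_right_mono)
    thus ?thesis using fl False by (simp add: k_def)
  qed
  moreover have "x \<le> real (Suc k) * h"
  proof (cases "m \<le> K - 1")
    case True hence "k = m" by (simp add: k_def)
    thus ?thesis using fl by (simp add: algebra_simps)
  next
    case False
    hence "k = K - 1" by (simp add: k_def)
    hence "real (Suc k) = real K" using Kpos by simp
    thus ?thesis using K1 assms by simp
  qed
  ultimately show ?thesis using assms unfolding K_def col_def by auto
qed

lemma lohi:
  assumes "continuous_on {0..1} \<phi>" "0 < h" "k < ncol h"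
  shows "\<forall>x\<in>col h k. lo \<phi> h k \<le> \<phi> x \<and> \<phi> x \<le> hi \<phi> h k"
    "{lo \<phi> h k .. hi \<phi> h k} \<subseteq> \<phi> ` col h k"
    "lo \<phi> h k \<in> \<phi> ` col h k" "hi \<phi> h k \<in> \<phi> ` col h k"
    "lo \<phi> h k \<le> hi \<phi> h k"
proof -
  have cs: "col h k \<subseteq> {0..1}" and ne: "col h k \<noteq> {}" using col_basic[OF assms(2,3)] by auto
  have cont: "continuous_on (col h k) \<phi>" using continuous_on_subset[OF assms(1) cs] .
  have comp: "compact (\<phi> ` col h k)"
    by (rule compact_continuous_image[OF cont]) (simp add: col_def)
  have conn: "connected (\<phi> ` col h k)"
    by (rule connected_continuous_image[OF cont]) (simp add: col_def)
  have ine: "\<phi> ` col h k \<noteq> {}" using ne by auto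
  have bb: "bdd_below (\<phi> ` col h k)" "bdd_above (\<phi> ` col h k)"
    using compact_imp_bounded[OF comp] by (auto simp: bounded_imp_bdd_below bounded_imp_bdd_above)
  show "\<forall>x\<in>col h k. lo \<phi> h k \<le> \<phi> x \<and> \<phi> x \<le> hi \<phi> h k"
    unfolding lo_def hi_def using bb by (auto intro: cInf_lower cSup_upper)
  show l: "lo \<phi> h k \<in> \<phi> ` col h k" unfolding lo_def
    using closed_contains_Inf[OF ine bb(1) compact_imp_closed[OF comp]] .
  show u: "hi \<phi> h k \<in> \<phi> ` col h k" unfolding hi_def
    using closed_contains_Sup[OF ine bb(2) compact_imp_closed[OF comp]] .
  show "{lo \<phi> h k .. hi \<phi> h k} \<subseteq> \<phi> ` col h k"
    using connected_contains_Icc[OF conn l u] .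
  show "lo \<phi> h k \<le> hi \<phi> h k" unfolding lo_def hi_def
    using bb ine by (simp add: cInf_le_cSup)
qed

lemma upper:
  assumes cont: "continuous_on {0..1} \<phi>" and d: "0 < \<delta>"
  defines "h \<equiv> \<delta>/2"
  shows "\<exists>C. finite C \<and> card C \<le> (\<Sum>k<ncol h. nat \<lceil>(hi \<phi> h k - lo \<phi> h k)/h\<rceil> + 1)
     \<and> (\<forall>S\<in>C. bounded S \<and> diameter S \<le> \<delta>) \<and> graph01 \<phi> \<subseteq> \<Union>C"
proof -
  have h: "0 < h" using d by (simp add: h_def)
  define n where "n k = nat \<lceil>(hi \<phi> h k - lo \<phi> h k)/h\<rceil>" for k
  define B where "B k j = {real k * h .. real (Suc k) * h} \<times>
     {lo \<phi> h k + real j * h .. lo \<phi> h k + real (Suc j) * h}" for k j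
  define C where "C = (\<Union>k<ncol h. B k ` {..n k})"
  have fin: "finite C" unfolding C_def by auto
  have "card C \<le> (\<Sum>k<ncol h. card (B k ` {..n k}))"
    unfolding C_def by (rule card_UN_le) simp
  also have "\<dots> \<le> (\<Sum>k<ncol h. n k + 1)"
    by (rule sum_mono) (metis card_atMost card_image_le finite_atMost Suc_eq_plus1)
  finally have card: "card C \<le> (\<Sum>k<ncol h. n k + 1)" .
  have diam: "bounded S \<and> diameter S \<le> \<delta>" if "S \<in> C" for S
  proof -
    obtain k j where S: "S = B k j" using \<open>S \<in> C\<close> unfolding C_def by auto
    have "bounded S" unfolding S B_def
      by (intro compact_imp_bounded compact_Times) auto
    moreover have "diameter S \<le> \<delta>"
    proof (rule diameter_le)
      show "S \<noteq> {} \<or> 0 \<le> \<delta>" using d by simp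
      fix p q assume pq: "p \<in> S" "q \<in> S"
      obtain a b where p: "p = (a,b)" by fastforce
      obtain a' b' where q: "q = (a',b')" by fastforce
      have "\<bar>a - a'\<bar> \<le> h" "\<bar>b - b'\<bar> \<le> h" using pq h unfolding S B_def p q
        by (auto simp: algebra_simps)
      hence "norm (a - a') + norm (b - b') \<le> \<delta>" by (simp add: h_def)
      moreover have "norm (p - q) \<le> norm (a - a') + norm (b - b')"
        unfolding p q using norm_Pair_le[of "a - a'" "b - b'"] by simp
      ultimately show "norm (p - q) \<le> \<delta>" by linarith
    qed
    ultimately show ?thesis by simp
  qed
  have cov: "graph01 \<phi> \<subseteq> \<Union>C"
  proof
    fix p assume "p \<in> graph01 \<phi>"
    then obtain x where x: "x \<in> {0..1}" and p: "p = (x, \<phi> x)" by (auto simp: graph01_def)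
    obtain k where k: "k < ncol h" "x \<in> col h k" using col_cover[OF h x] by auto
    note L = lohi[OF cont h k(1)]
    have y: "lo \<phi> h k \<le> \<phi> x" "\<phi> x \<le> hi \<phi> h k" using L(1) k(2) by auto
    define t where "t = (\<phi> x - lo \<phi> h k)/h"
    have t0: "0 \<le> t" using y h by (simp add: t_def)
    have t1: "t \<le> (hi \<phi> h k - lo \<phi> h k)/h" using y h unfolding t_def
      by (simp add: divide_right_mono)
    define j where "j = nat \<lfloor>t\<rfloor>"
    have jt: "real j \<le> t" "t < real j + 1" using t0 unfolding j_def by linarith+
    have "j \<le> n k" unfolding j_def n_def using t1
      by (meson ceiling_mono floor_le_ceiling nat_mono order_trans)
    moreover have "p \<in> B k j"
    proof -
      have "real j * h \<le> \<phi> x - lo \<phi> h k" using jt(1) h unfolding t_def by (simp add: field_simps)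
      moreover have "\<phi> x - lo \<phi> h k \<le> real (Suc j) * h" using jt(2) h unfolding t_def by (simp add: field_simps)
      moreover have "real k * h \<le> x" "x \<le> real (Suc k) * h" using k(2) by (auto simp: col_def)
      ultimately show ?thesis unfolding p B_def by auto
    qed
    ultimately show "p \<in> \<Union>C" using k(1) unfolding C_def by auto
  qed
  show ?thesis using fin card diam cov unfolding n_def by blast
qed

lemma lower:
  assumes cont: "continuous_on {0..1} \<phi>" and d: "0 < \<delta>" and fin: "finite C"
    and CS: "\<forall>S\<in>C. bounded S \<and> diameter S \<le> \<delta>" and cov: "graph01 \<phi> \<subseteq> \<Union>C"
  defines "h \<equiv> \<delta>/2"
  shows "real (ncol h) \<le> 6 * real (card C)"
    "(\<Sum>k<ncol h. hi \<phi> h k - lo \<phi> h k) \<le> 12 * \<delta> * real (card C)"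
proof -
  have h: "0 < h" using d by (simp add: h_def)
  define Ck where "Ck k = {S\<in>C. \<exists>x\<in>col h k. (x, \<phi> x) \<in> S}" for k
  have Cksub: "Ck k \<subseteq> C" for k unfolding Ck_def by auto
  have Ckfin: "finite (Ck k)" for k using finite_subset[OF Cksub fin] .
  have ingraph: "(x, \<phi> x) \<in> graph01 \<phi>" if "x \<in> col h k" "k < ncol h" for x k
    using col_basic(2)[OF h that(2)] that(1) unfolding graph01_def by auto
  have ne: "1 \<le> card (Ck k)" if k: "k < ncol h" for k
  proof -
    have x: "real k * h \<in> col h k" using col_basic(1)[OF h k] .
    then obtain S where "S \<in> C" "(real k * h, \<phi> (real k * h)) \<in> S"
      using ingraph[OF x k] cov by blast
    hence "S \<in> Ck k" using x unfolding Ck_def by blast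
    thus ?thesis using Ckfin[of k] by (metis One_nat_def Suc_leI card_gt_0_iff empty_iff)
  qed
  have osc: "hi \<phi> h k - lo \<phi> h k \<le> 2 * \<delta> * real (card (Ck k))" if k: "k < ncol h" for k
  proof -
    note L = lohi[OF cont h k]
    define pS where "pS S = (SOME x. x \<in> col h k \<and> (x, \<phi> x) \<in> S)" for S
    have pS: "pS S \<in> col h k \<and> (pS S, \<phi> (pS S)) \<in> S" if "S \<in> Ck k" for S
    proof -
      from that obtain x where "x \<in> col h k \<and> (x, \<phi> x) \<in> S" unfolding Ck_def by auto
      thus ?thesis unfolding pS_def by (rule someI[where P="\<lambda>x. x \<in> col h k \<and> (x, \<phi> x) \<in> S"])
    qed
    define I where "I S = {\<phi> (pS S) - \<delta> .. \<phi> (pS S) + \<delta>}" for S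
    have sub: "{lo \<phi> h k .. hi \<phi> h k} \<subseteq> (\<Union>S\<in>Ck k. I S)"
    proof
      fix y assume "y \<in> {lo \<phi> h k .. hi \<phi> h k}"
      then obtain x where x: "x \<in> col h k" "y = \<phi> x" using L(2) by blast
      then obtain S where S: "S \<in> C" "(x, \<phi> x) \<in> S" using ingraph[OF x(1) k] cov by blast
      hence SC: "S \<in> Ck k" using x unfolding Ck_def by blast
      have "dist (x, \<phi> x) (pS S, \<phi> (pS S)) \<le> diameter S"
        using diameter_bounded_bound[of S] CS S pS[OF SC] by auto
      hence "dist (\<phi> x) (\<phi> (pS S)) \<le> \<delta>" using CS S
        using dist_snd_le[of "(x, \<phi> x)" "(pS S, \<phi> (pS S))"] by force
      hence "y \<in> I S" unfolding I_def x(2) dist_real_def by auto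
      thus "y \<in> (\<Union>S\<in>Ck k. I S)" using SC by blast
    qed
    have "ennreal (hi \<phi> h k - lo \<phi> h k) = emeasure lborel {lo \<phi> h k .. hi \<phi> h k}"
      using L(5) by simp
    also have "\<dots> \<le> emeasure lborel (\<Union>S\<in>Ck k. I S)"
      by (rule emeasure_mono[OF sub]) (auto simp: I_def Ckfin intro!: borel_closed closed_UN)
    also have "\<dots> \<le> (\<Sum>S\<in>Ck k. emeasure lborel (I S))"
      by (rule emeasure_subadditive_finite) (auto simp: Ckfin I_def)
    also have "\<dots> = (\<Sum>S\<in>Ck k. ennreal (2 * \<delta>))"
      using d by (intro sum.cong) (auto simp: I_def)
    also have "\<dots> = ennreal (2 * \<delta> * real (card (Ck k)))"
      using d by (simp add: ennreal_mult ennreal_of_nat_eq_real_of_nat mult.commute)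
    finally show ?thesis using d by (subst (asm) ennreal_le_iff) auto
  qed
  define KS where "KS S = {k\<in>{..<ncol h}. S \<in> Ck k}" for S
  have KS6: "card (KS S) \<le> 6" if SC: "S \<in> C" for S
  proof (cases "S = {}")
    case True
    hence "KS S = {}" unfolding KS_def Ck_def by auto
    thus ?thesis by simp
  next
    case False
    then obtain q where q: "q \<in> S" by auto
    define t where "t = fst q / h - 3"
    define m where "m = nat \<lceil>t\<rceil>"
    have mt: "t \<le> real m" unfolding m_def by linarith
    have "KS S \<subseteq> {m..<m+6}"
    proof
      fix k assume "k \<in> KS S"
      then obtain x where x: "x \<in> col h k" "(x, \<phi> x) \<in> S" unfolding KS_def Ck_def by auto
      have "dist (x, \<phi> x) q \<le> diameter S"
        using diameter_bounded_bound[of S] CS SC q x(2) by auto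
      hence "dist x (fst q) \<le> \<delta>" using CS SC
        using dist_fst_le[of "(x, \<phi> x)" q] by force
      hence xq: "\<bar>x - fst q\<bar> \<le> 2 * h" unfolding dist_real_def h_def by simp
      have xc: "real k * h \<le> x" "x \<le> real (Suc k) * h" using x(1) by (auto simp: col_def)
      have "real k * h \<le> (fst q / h + 2) * h" using xq xc h by (simp add: algebra_simps)
      hence k1: "real k \<le> fst q / h + 2" using h by (simp only: mult_le_cancel_right_pos)
      have "(fst q / h - 3) * h \<le> real k * h" using xq xc h by (simp add: algebra_simps)
      hence k2: "fst q / h - 3 \<le> real k" using h by (simp only: mult_le_cancel_right_pos)
      have "\<lceil>t\<rceil> \<le> int k" using k2 unfolding t_def by (simp only: ceiling_le_iff of_int_of_nat_eq)
      hence "m \<le> k" unfolding m_def by (metis nat_int nat_mono)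
      moreover have "k < m + 6" using k1 mt unfolding t_def by linarith
      ultimately show "k \<in> {m..<m+6}" by simp
    qed
    thus ?thesis by (metis card_atLeastLessThan card_mono finite_atLeastLessThan add_diff_cancel_left')
  qed
  have dc: "(\<Sum>k<ncol h. card (Ck k)) = (\<Sum>S\<in>C. card (KS S))"
  proof -
    have "(\<Sum>k<ncol h. card (Ck k)) = (\<Sum>k<ncol h. \<Sum>S\<in>C. if S \<in> Ck k then 1 else 0)"
    proof (intro sum.cong refl)
      fix k
      have "card (Ck k) = (\<Sum>S\<in>C \<inter> Ck k. 1)" using Cksub[of k] by (simp add: Int_absorb1)
      also have "\<dots> = (\<Sum>S\<in>C. if S \<in> Ck k then 1 else 0)"
        by (rule sum.inter_restrict[OF fin])
      finally show "card (Ck k) = (\<Sum>S\<in>C. if S \<in> Ck k then 1 else 0)" .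
    qed
    also have "\<dots> = (\<Sum>S\<in>C. \<Sum>k<ncol h. if S \<in> Ck k then 1 else 0)"
      by (rule sum.swap)
    also have "\<dots> = (\<Sum>S\<in>C. card (KS S))"
    proof (intro sum.cong refl)
      fix S
      have e: "KS S = {..<ncol h} \<inter> {k. S \<in> Ck k}" unfolding KS_def by auto
      have "(\<Sum>k<ncol h. if S \<in> Ck k then 1 else 0) = (\<Sum>k\<in>{..<ncol h} \<inter> {k. S \<in> Ck k}. (1::nat))"
        by (subst sum.inter_restrict) simp_all
      also have "\<dots> = card (KS S)" unfolding e by simp
      finally show "(\<Sum>k<ncol h. if S \<in> Ck k then 1 else 0) = card (KS S)" .
    qed
    finally show ?thesis .
  qed
  have "(\<Sum>k<ncol h. card (Ck k)) \<le> (\<Sum>S\<in>C. 6)"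
    unfolding dc by (rule sum_mono) (rule KS6)
  hence "(\<Sum>k<ncol h. card (Ck k)) \<le> 6 * card C" by (simp add: mult.commute)
  hence "real (\<Sum>k<ncol h. card (Ck k)) \<le> real (6 * card C)" by (rule of_nat_mono)
  hence dc6: "real (\<Sum>k<ncol h. card (Ck k)) \<le> 6 * real (card C)"
    by (simp only: of_nat_mult of_nat_numeral)
  have "real (ncol h) = (\<Sum>k<ncol h. 1::real)" by simp
  also have "\<dots> \<le> (\<Sum>k<ncol h. real (card (Ck k)))"
    by (rule sum_mono) (use ne in auto)
  also have "\<dots> = real (\<Sum>k<ncol h. card (Ck k))" by simp
  finally show "real (ncol h) \<le> 6 * real (card C)" using dc6 by linarith
  have "(\<Sum>k<ncol h. hi \<phi> h k - lo \<phi> h k) \<le> (\<Sum>k<ncol h. 2 * \<delta> * real (card (Ck k)))"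
    by (rule sum_mono) (rule osc, simp)
  also have "\<dots> = 2 * \<delta> * real (\<Sum>k<ncol h. card (Ck k))"
    by (simp add: sum_distrib_left)
  also have "\<dots> \<le> 2 * \<delta> * (6 * real (card C))"
    using dc6 d by (intro mult_left_mono) auto
  finally show "(\<Sum>k<ncol h. hi \<phi> h k - lo \<phi> h k) \<le> 12 * \<delta> * real (card C)" by simp
qed

lemma osc_prod:
  assumes cf: "continuous_on {0..1} f" and cg: "continuous_on {0..1} g" and h: "0 < h"
    and k: "k < ncol h" and A: "\<forall>x\<in>{0..1}. \<bar>g x\<bar> \<le> A" and B: "\<forall>x\<in>{0..1}. \<bar>f x\<bar> \<le> B"
  shows "hi (\<lambda>x. f x * g x) h k - lo (\<lambda>x. f x * g x) h k
     \<le> A * (hi f h k - lo f h k) + B * (hi g h k - lo g h k)"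
proof -
  have cfg: "continuous_on {0..1} (\<lambda>x. f x * g x)" using cf cg by (rule continuous_on_mult)
  note L = lohi[OF cfg h k] and Lf = lohi[OF cf h k] and Lg = lohi[OF cg h k]
  obtain a where a: "a \<in> col h k" "lo (\<lambda>x. f x * g x) h k = f a * g a" using L(3) by auto
  obtain b where b: "b \<in> col h k" "hi (\<lambda>x. f x * g x) h k = f b * g b" using L(4) by auto
  have ab01: "a \<in> {0..1}" "b \<in> {0..1}" using a b col_basic(2)[OF h k] by auto
  have "lo f h k \<le> f a \<and> f a \<le> hi f h k" "lo f h k \<le> f b \<and> f b \<le> hi f h k"
    using Lf(1) a(1) b(1) by auto
  hence of: "\<bar>f b - f a\<bar> \<le> hi f h k - lo f h k" unfolding abs_le_iff by linarith
  have "lo g h k \<le> g a \<and> g a \<le> hi g h k" "lo g h k \<le> g b \<and> g b \<le> hi g h k"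
    using Lg(1) a(1) b(1) by auto
  hence og: "\<bar>g b - g a\<bar> \<le> hi g h k - lo g h k" unfolding abs_le_iff by linarith
  have "f b * g b - f a * g a = f b * (g b - g a) + g a * (f b - f a)" by (simp add: algebra_simps)
  also have "\<dots> \<le> \<bar>f b\<bar> * \<bar>g b - g a\<bar> + \<bar>g a\<bar> * \<bar>f b - f a\<bar>"
    by (metis abs_ge_self abs_mult add_mono)
  also have "\<dots> \<le> B * (hi g h k - lo g h k) + A * (hi f h k - lo f h k)"
    using B A ab01 of og by (intro add_mono mult_mono) auto
  finally show ?thesis using a b by simp
qed

lemma count_bound:
  assumes cf: "continuous_on {0..1} f" and cg: "continuous_on {0..1} g" and d: "0 < \<delta>"
    and A: "\<forall>x\<in>{0..1}. \<bar>g x\<bar> \<le> A" and B: "\<forall>x\<in>{0..1}. \<bar>f x\<bar> \<le> B" and A0: "0 \<le> A" and B0: "0 \<le> B"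
  shows "real (cover_number \<delta> (graph01 (\<lambda>x. f x * g x)))
     \<le> (24 * A + 24 * B + 12) * max (real (cover_number \<delta> (graph01 f))) (real (cover_number \<delta> (graph01 g)))"
proof -
  define h where "h = \<delta>/2"
  have h: "0 < h" using d by (simp add: h_def)
  define fg where "fg = (\<lambda>x. f x * g x)"
  have cfg: "continuous_on {0..1} fg" unfolding fg_def using cf cg by (rule continuous_on_mult)
  define P where "P \<phi> n = (\<exists>C. finite C \<and> card C = n \<and>
      (\<forall>S\<in>C. bounded S \<and> diameter S \<le> \<delta>) \<and> graph01 \<phi> \<subseteq> \<Union>C)" for \<phi> n
  have cn: "cover_number \<delta> (graph01 \<phi>) = (LEAST n. P \<phi> n)" for \<phi>
    unfolding cover_number_def P_def by simp
  have opt: "\<exists>C. finite C \<and> card C = cover_number \<delta> (graph01 \<phi>) \<and>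
      (\<forall>S\<in>C. bounded S \<and> diameter S \<le> \<delta>) \<and> graph01 \<phi> \<subseteq> \<Union>C"
    if c: "continuous_on {0..1} \<phi>" for \<phi>
  proof -
    obtain C where "finite C" "(\<forall>S\<in>C. bounded S \<and> diameter S \<le> \<delta>)" "graph01 \<phi> \<subseteq> \<Union>C"
      using upper[OF c d] by blast
    hence "P \<phi> (card C)" unfolding P_def by blast
    hence "P \<phi> (LEAST n. P \<phi> n)" by (rule LeastI)
    thus ?thesis unfolding cn P_def .
  qed
  define N where "N = cover_number \<delta> (graph01 fg)"
  define Nf where "Nf = cover_number \<delta> (graph01 f)"
  define Ng where "Ng = cover_number \<delta> (graph01 g)"
  define osc where "osc \<phi> k = hi \<phi> h k - lo \<phi> h k" for \<phi> k
  have oscnn: "0 \<le> osc \<phi> k" if "continuous_on {0..1} \<phi>" "k < ncol h" for \<phi> k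
    using lohi(5)[OF that(1) h that(2)] unfolding osc_def by simp
  obtain Cfg where Cfg: "finite Cfg" "card Cfg \<le> (\<Sum>k<ncol h. nat \<lceil>osc fg k/h\<rceil> + 1)"
    "(\<forall>S\<in>Cfg. bounded S \<and> diameter S \<le> \<delta>)" "graph01 fg \<subseteq> \<Union>Cfg"
    using upper[OF cfg d] unfolding h_def osc_def by blast
  have "P fg (card Cfg)" unfolding P_def using Cfg by blast
  hence "N \<le> card Cfg" unfolding N_def cn by (rule Least_le)
  hence N1: "real N \<le> real (\<Sum>k<ncol h. nat \<lceil>osc fg k/h\<rceil> + 1)" using Cfg(2) by linarith
  obtain Cf where Cf: "finite Cf" "card Cf = Nf" "(\<forall>S\<in>Cf. bounded S \<and> diameter S \<le> \<delta>)" "graph01 f \<subseteq> \<Union>Cf"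
    using opt[OF cf] unfolding Nf_def by blast
  obtain Cg where Cg: "finite Cg" "card Cg = Ng" "(\<forall>S\<in>Cg. bounded S \<and> diameter S \<le> \<delta>)" "graph01 g \<subseteq> \<Union>Cg"
    using opt[OF cg] unfolding Ng_def by blast
  have nf: "real (ncol h) \<le> 6 * real Nf" "(\<Sum>k<ncol h. osc f k) \<le> 12 * \<delta> * real Nf"
    using lower[OF cf d Cf(1,3,4)] Cf(2) unfolding h_def osc_def by auto
  have ng: "(\<Sum>k<ncol h. osc g k) \<le> 12 * \<delta> * real Ng"
    using lower[OF cg d Cg(1,3,4)] Cg(2) unfolding h_def osc_def by auto
  have "real (\<Sum>k<ncol h. nat \<lceil>osc fg k/h\<rceil> + 1) = (\<Sum>k<ncol h. real (nat \<lceil>osc fg k/h\<rceil>) + 1)"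
    by (simp add: add.commute)
  also have "\<dots> \<le> (\<Sum>k<ncol h. (A * osc f k + B * osc g k) / h + 2)"
  proof (rule sum_mono)
    fix k assume "k \<in> {..<ncol h}"
    hence k: "k < ncol h" by simp
    have o: "osc fg k \<le> A * osc f k + B * osc g k"
      using osc_prod[OF cf cg h k A B] unfolding osc_def fg_def .
    have "0 \<le> osc fg k / h" using oscnn[OF cfg k] h by simp
    hence "real (nat \<lceil>osc fg k/h\<rceil>) \<le> osc fg k / h + 1" by linarith
    moreover have "osc fg k / h \<le> (A * osc f k + B * osc g k) / h" using o h by (simp add: divide_right_mono)
    ultimately show "real (nat \<lceil>osc fg k/h\<rceil>) + 1 \<le> (A * osc f k + B * osc g k) / h + 2" by linarith
  qed
  also have "\<dots> = (A * (\<Sum>k<ncol h. osc f k) + B * (\<Sum>k<ncol h. osc g k)) / h + 2 * real (ncol h)"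
    by (simp add: sum.distrib sum_divide_distrib[symmetric] sum_distrib_left)
  also have "\<dots> \<le> (A * (12 * \<delta> * real Nf) + B * (12 * \<delta> * real Ng)) / h + 2 * (6 * real Nf)"
    using nf ng A0 B0 h by (intro add_mono divide_right_mono mult_left_mono) auto
  also have "\<dots> = 24 * A * real Nf + 24 * B * real Ng + 12 * real Nf"
    using d by (simp add: h_def field_simps)
  also have "\<dots> \<le> (24 * A + 24 * B + 12) * max (real Nf) (real Ng)"
  proof -
    have "A * real Nf \<le> A * max (real Nf) (real Ng)" "B * real Ng \<le> B * max (real Nf) (real Ng)"
      "real Nf \<le> max (real Nf) (real Ng)"
      using A0 B0 by (auto intro: mult_left_mono)
    thus ?thesis by (simp add: algebra_simps)
  qed
  finally show ?thesis using N1 unfolding N_def Nf_def Ng_def fg_def by linarith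
qed

lemma ln_ineq:
  fixes N Nf Ng :: nat and D L :: real
  assumes N: "real N \<le> D * max (real Nf) (real Ng)" and D: "1 \<le> D" and L: "0 < L"
  shows "ln (real N) / L \<le> ln D / L + max (ln (real Nf) / L) (ln (real Ng) / L)"
proof -
  have lnD: "0 \<le> ln D" using D by simp
  have lnn: "0 \<le> ln (real n)" for n :: nat by (cases n) auto
  have main: "ln (real N) \<le> ln D + max (ln (real Nf)) (ln (real Ng))"
  proof (cases "N = 0")
    case True thus ?thesis using lnD lnn[of Nf] by simp
  next
    case False
    define M where "M = max (real Nf) (real Ng)"
    have "0 < real N" using False by simp
    have Mpos: "0 < M"
    proof (rule ccontr)
      assume "\<not> 0 < M"
      hence "D * M \<le> 0" using D by (simp add: mult_nonneg_nonpos)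
      thus False using N \<open>0 < real N\<close> unfolding M_def by linarith
    qed
    have "ln (real N) \<le> ln (D * M)" unfolding M_def by (rule ln_mono[OF N \<open>0 < real N\<close>])
    also have "\<dots> = ln D + ln M" using D Mpos by (simp add: ln_mult)
    also have "ln M \<le> max (ln (real Nf)) (ln (real Ng))" unfolding M_def by (auto simp: max_def)
    finally show ?thesis by simp
  qed
  have "ln (real N) / L \<le> (ln D + max (ln (real Nf)) (ln (real Ng))) / L"
    using main L by (simp add: divide_right_mono)
  also have "\<dots> = ln D / L + max (ln (real Nf) / L) (ln (real Ng) / L)"
    using L by (simp add: add_divide_distrib max_divide_distrib_right)
  finally show ?thesis .
qed

theorem lemma3p1:
  fixes f g :: "real \<Rightarrow> real"
  assumes "continuous_on {0..1} f" and "continuous_on {0..1} g"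
  shows "upper_box_dim (graph01 (\<lambda>x. f x * g x))
           \<le> max (upper_box_dim (graph01 f)) (upper_box_dim (graph01 g))"
proof -
  note cf = assms(1) and cg = assms(2)
  obtain a where a: "\<forall>x\<in>g ` {0..1}. \<bar>x\<bar> \<le> a"
    using compact_imp_bounded[OF compact_continuous_image[OF cg compact_Icc]] bounded_real by blast
  obtain b where b: "\<forall>x\<in>f ` {0..1}. \<bar>x\<bar> \<le> b"
    using compact_imp_bounded[OF compact_continuous_image[OF cf compact_Icc]] bounded_real by blast
  define A where "A = max a 0"
  define B where "B = max b 0"
  have A: "\<forall>x\<in>{0..1}. \<bar>g x\<bar> \<le> A" "0 \<le> A" using a unfolding A_def by force+
  have B: "\<forall>x\<in>{0..1}. \<bar>f x\<bar> \<le> B" "0 \<le> B" using b unfolding B_def by force+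
  define D where "D = 24 * A + 24 * B + 12"
  have D: "1 \<le> D" using A B unfolding D_def by simp
  define r where "r \<phi> \<delta> = ln (real (cover_number \<delta> (graph01 \<phi>))) / (- ln \<delta>)" for \<phi> and \<delta> :: real
  define c where "c \<delta> = ln D / (- ln \<delta>)" for \<delta> :: real
  have ev01: "eventually (\<lambda>\<delta>. 0 < \<delta> \<and> \<delta> < 1) (at_right (0::real))"
    unfolding eventually_at_right_field by (intro exI[of _ 1]) auto
  have key: "eventually (\<lambda>\<delta>. r (\<lambda>x. f x * g x) \<delta> \<le> c \<delta> + max (r f \<delta>) (r g \<delta>)) (at_right 0)"
    using ev01
  proof (rule eventually_mono)
    fix \<delta> :: real assume d: "0 < \<delta> \<and> \<delta> < 1"
    hence L: "0 < - ln \<delta>" by simp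
    show "r (\<lambda>x. f x * g x) \<delta> \<le> c \<delta> + max (r f \<delta>) (r g \<delta>)"
      unfolding r_def c_def
      using ln_ineq[OF count_bound[OF cf cg _ A(1) B(1) A(2) B(2)] _ L] d D unfolding D_def by simp
  qed
  have lim: "(c \<longlongrightarrow> 0) (at_right 0)"
    unfolding c_def
    by (intro tendsto_divide_0[OF tendsto_const] filterlim_at_top_imp_at_infinity)
       (simp add: filterlim_uminus_at_top ln_at_0)
  define Lf where "Lf = upper_box_dim (graph01 f)"
  define Lg where "Lg = upper_box_dim (graph01 g)"
  have Lf: "Lf = Limsup (at_right 0) (\<lambda>\<delta>. ereal (r f \<delta>))" unfolding Lf_def upper_box_dim_def r_def ..
  have Lg: "Lg = Limsup (at_right 0) (\<lambda>\<delta>. ereal (r g \<delta>))" unfolding Lg_def upper_box_dim_def r_def ..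
  have "Limsup (at_right 0) (\<lambda>\<delta>. ereal (r (\<lambda>x. f x * g x) \<delta>)) \<le> max Lf Lg"
    unfolding Limsup_le_iff
  proof (intro allI impI)
    fix y assume y: "max Lf Lg < y"
    obtain y' where y': "max Lf Lg < y'" "y' < y" using dense[OF y] by blast
    have ef: "eventually (\<lambda>\<delta>. ereal (r f \<delta>) < y') (at_right 0)"
      using y' Lf Limsup_le_iff[where C="Lf" and F="at_right 0" and X="\<lambda>\<delta>. ereal (r f \<delta>)"] by auto
    have eg: "eventually (\<lambda>\<delta>. ereal (r g \<delta>) < y') (at_right 0)"
      using y' Lg Limsup_le_iff[where C="Lg" and F="at_right 0" and X="\<lambda>\<delta>. ereal (r g \<delta>)"] by auto
    show "eventually (\<lambda>\<delta>. ereal (r (\<lambda>x. f x * g x) \<delta>) < y) (at_right 0)"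
    proof (cases y)
      case PInf thus ?thesis by simp
    next
      case MInf thus ?thesis using y by simp
    next
      case (real yr)
      obtain yr' where yr': "y' = ereal yr'" using y' real
        by (cases y') auto
      have lt: "yr' < yr" using y' real yr' by simp
      have ec: "eventually (\<lambda>\<delta>. c \<delta> < yr - yr') (at_right 0)"
        using order_tendstoD(2)[OF lim, of "yr - yr'"] lt by simp
      show ?thesis using key ec ef eg
      proof (eventually_elim)
        case (elim \<delta>)
        hence "r f \<delta> < yr'" "r g \<delta> < yr'" using yr' by auto
        hence "r (\<lambda>x. f x * g x) \<delta> < yr" using elim by linarith
        thus ?case using real by simp
      qed
    qed
  qed
  thus ?thesis unfolding Lf_def Lg_def upper_box_dim_def r_def .
qed

end
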